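(* Let $X_1,\dots,X_p$ be metrizable spaces and $B\hookrightarrow A\twoheadrightarrow A/B$ an exact sequence of Polish Abelian groups ($B$ closed in $A$; no continuous cross-section is assumed). Then every almost layered function $f:X_{\le p}\times I^p\to A/B$ has an almost layered lift $F:X_{\le p}\times I^p\to A$.
   Context: Let $I=(0,1]$. A continuous dissection over a metrizable $X$ is a locally finite family $\mathcal{F}$ of continuous functions $X\to[0,1]$ containing $0,1$ (every point has a neighbourhood $U$ with $\{\xi|_U:\xi\in\mathcal{F}\}$ finite); l-complete means closed under pointwise max, min, and pointwise limits of convergent directed families. An $\mathcal{F}$-wedge is $\{(x,t):\xi_1(x)<t\le\xi_2(x)\}$. With $X_{\le i}=X_1\times\cdots\times X_i$, an ascending tuple $(\mathcal{F}_1,\dots,\mathcal{F}_p)$ has $\mathcal{F}_i$ a continuous dissection over $X_{\le i}$; a multiwedge is $\{(x_1,\dots,x_p,t_1,\dots,t_p):(x_1,\dots,x_i,t_i)\in C_i\ \forall i\}$ with $C_i$ an $\mathcal{F}_i$-wedge; minimal = nonempty and inclusion-minimal. A function $\gamma:X_{\le p}\times I^p\to A$ is layered if for some ascending tuple of l-complete continuous dissections it is constant on every minimal multiwedge. For a Polish Abelian group $A$ with a translation-invariant compatible metric $d$ (the resulting notion is independent of this choice), a function is almost layered if it is a uniform limit (in the sup-metric induced by $d$) of layered functions. On $A/B$ one uses the quotient metric. *)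

theory Defs
  imports "HOL-Analysis.Analysis"
begin

definition Iint :: "real set" where "Iint = {0<..1}"

text \<open>Continuous dissection over a (metrizable) space T.  Functions are
  compared only on the points of T.\<close>
definition cont_dissection :: "'p topology \<Rightarrow> ('p \<Rightarrow> real) set \<Rightarrow> bool" where
  "cont_dissection T F \<longleftrightarrow>
     (\<forall>\<xi>\<in>F. continuous_map T euclideanreal \<xi> \<and> \<xi> ` topspace T \<subseteq> {0..1}) \<and>
     (\<exists>\<xi>\<in>F. \<forall>x\<in>topspace T. \<xi> x = 0) \<and>
     (\<exists>\<xi>\<in>F. \<forall>x\<in>topspace T. \<xi> x = 1) \<and>
     (\<forall>x\<in>topspace T. \<exists>U. openin T U \<and> x \<in> U \<and> finite ((\<lambda>\<xi>. restrict \<xi> U) ` F))"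

text \<open>l-completeness: closed under pointwise max, min, and pointwise limits of
  convergent directed families (nets in F; a net is encoded by its image filter
  on the function space).\<close>
definition l_complete :: "'p topology \<Rightarrow> ('p \<Rightarrow> real) set \<Rightarrow> bool" where
  "l_complete T F \<longleftrightarrow>
     (\<forall>\<xi>1\<in>F. \<forall>\<xi>2\<in>F. \<exists>\<eta>\<in>F. \<forall>x\<in>topspace T. \<eta> x = max (\<xi>1 x) (\<xi>2 x)) \<and>
     (\<forall>\<xi>1\<in>F. \<forall>\<xi>2\<in>F. \<exists>\<eta>\<in>F. \<forall>x\<in>topspace T. \<eta> x = min (\<xi>1 x) (\<xi>2 x)) \<and>
     (\<forall>(N :: ('p \<Rightarrow> real) filter) g. N \<noteq> bot \<and> eventually (\<lambda>\<xi>. \<xi> \<in> F) N \<and>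
        (\<forall>x\<in>topspace T. ((\<lambda>\<xi>. \<xi> x) \<longlongrightarrow> g x) N)
        \<longrightarrow> (\<exists>\<eta>\<in>F. \<forall>x\<in>topspace T. \<eta> x = g x))"

text \<open>X_{<= i} = X_1 x ... x X_i, with the spaces indexed 0..i-1 (Xs 0 = X_1).\<close>
definition Xle :: "(nat \<Rightarrow> 'a topology) \<Rightarrow> nat \<Rightarrow> (nat \<Rightarrow> 'a) topology" where
  "Xle Xs i = product_topology Xs {..<i}"

definition dom_layer :: "(nat \<Rightarrow> 'a topology) \<Rightarrow> nat \<Rightarrow> ((nat \<Rightarrow> 'a) \<times> (nat \<Rightarrow> real)) set" where
  "dom_layer Xs p = topspace (Xle Xs p) \<times> (PiE {..<p} (\<lambda>_. Iint))"

definition ascending_lc :: "(nat \<Rightarrow> 'a topology) \<Rightarrow> nat \<Rightarrow> (nat \<Rightarrow> ((nat \<Rightarrow> 'a) \<Rightarrow> real) set) \<Rightarrow> bool" where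
  "ascending_lc Xs p Fs \<longleftrightarrow>
     (\<forall>i<p. cont_dissection (Xle Xs (Suc i)) (Fs i) \<and> l_complete (Xle Xs (Suc i)) (Fs i))"

definition wedge :: "'p topology \<Rightarrow> ('p \<Rightarrow> real) \<Rightarrow> ('p \<Rightarrow> real) \<Rightarrow> ('p \<times> real) set" where
  "wedge T \<xi>1 \<xi>2 = {(x, t). x \<in> topspace T \<and> t \<in> Iint \<and> \<xi>1 x < t \<and> t \<le> \<xi>2 x}"

definition multiwedge :: "(nat \<Rightarrow> 'a topology) \<Rightarrow> nat \<Rightarrow> (nat \<Rightarrow> ((nat \<Rightarrow> 'a) \<Rightarrow> real) set)
     \<Rightarrow> ((nat \<Rightarrow> 'a) \<times> (nat \<Rightarrow> real)) set \<Rightarrow> bool" where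
  "multiwedge Xs p Fs M \<longleftrightarrow>
     (\<exists>\<xi>1 \<xi>2. (\<forall>i<p. \<xi>1 i \<in> Fs i \<and> \<xi>2 i \<in> Fs i) \<and>
        M = {(x, t) \<in> dom_layer Xs p.
               \<forall>i<p. (restrict x {..<Suc i}, t i) \<in> wedge (Xle Xs (Suc i)) (\<xi>1 i) (\<xi>2 i)})"

definition minimal_multiwedge where
  "minimal_multiwedge Xs p Fs M \<longleftrightarrow>
     multiwedge Xs p Fs M \<and> M \<noteq> {} \<and>
     (\<forall>M'. multiwedge Xs p Fs M' \<and> M' \<noteq> {} \<and> M' \<subseteq> M \<longrightarrow> M' = M)"

definition layered :: "(nat \<Rightarrow> 'a topology) \<Rightarrow> nat \<Rightarrow> ((nat \<Rightarrow> 'a) \<times> (nat \<Rightarrow> real) \<Rightarrow> 'b) \<Rightarrow> bool" where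
  "layered Xs p \<gamma> \<longleftrightarrow>
     (\<exists>Fs. ascending_lc Xs p Fs \<and>
        (\<forall>M. minimal_multiwedge Xs p Fs M \<longrightarrow> (\<exists>c. \<forall>z\<in>M. \<gamma> z = c)))"

definition almost_layered :: "(nat \<Rightarrow> 'a topology) \<Rightarrow> nat \<Rightarrow> 'b set \<Rightarrow> ('b \<Rightarrow> 'b \<Rightarrow> real)
     \<Rightarrow> ((nat \<Rightarrow> 'a) \<times> (nat \<Rightarrow> real) \<Rightarrow> 'b) \<Rightarrow> bool" where
  "almost_layered Xs p Y \<delta> f \<longleftrightarrow>
     (\<forall>z\<in>dom_layer Xs p. f z \<in> Y) \<and>
     (\<exists>g :: nat \<Rightarrow> ((nat \<Rightarrow> 'a) \<times> (nat \<Rightarrow> real) \<Rightarrow> 'b).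
        (\<forall>n. layered Xs p (g n) \<and> (\<forall>z\<in>dom_layer Xs p. g n z \<in> Y)) \<and>
        (\<forall>\<epsilon>>0. \<exists>N. \<forall>n\<ge>N. \<forall>z\<in>dom_layer Xs p. \<delta> (f z) (g n z) \<le> \<epsilon>))"

text \<open>Quotient A/B: elements are the cosets a + B.\<close>
definition coset :: "'g::ab_group_add set \<Rightarrow> 'g \<Rightarrow> 'g set" where
  "coset B a = (\<lambda>b. a + b) ` B"

definition quotient_set :: "'g::ab_group_add set \<Rightarrow> 'g set set" where
  "quotient_set B = range (coset B)"

definition quot_dist :: "'g::metric_space set \<Rightarrow> 'g set \<Rightarrow> real" where
  "quot_dist U V = Inf {dist u v | u v. u \<in> U \<and> v \<in> V}"

end

theory Submission
  imports Defs
begin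

lemma finite_sel:
  fixes \<Phi> :: "('p \<Rightarrow> real) set"
  assumes fin: "finite \<Phi>" and N: "N \<noteq> bot"
    and ev: "eventually (\<lambda>\<xi>. restrict \<xi> U \<in> \<Phi>) N"
    and conv: "\<forall>x\<in>U. ((\<lambda>\<xi>. \<xi> x) \<longlongrightarrow> g x) N"
  shows "\<exists>\<phi>\<in>\<Phi>. \<forall>x\<in>U. \<phi> x = g x"
proof (rule ccontr)
  assume "\<not> ?thesis"
  then have "\<forall>\<phi>\<in>\<Phi>. \<exists>x\<in>U. \<phi> x \<noteq> g x" by auto
  then obtain xs where xs: "\<forall>\<phi>\<in>\<Phi>. xs \<phi> \<in> U \<and> \<phi> (xs \<phi>) \<noteq> g (xs \<phi>)" by metis
  have "\<forall>\<phi>\<in>\<Phi>. eventually (\<lambda>\<xi>. dist (\<xi> (xs \<phi>)) (g (xs \<phi>)) < dist (\<phi> (xs \<phi>)) (g (xs \<phi>))) N"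
    using xs conv by (auto intro!: tendstoD)
  then have "eventually (\<lambda>\<xi>. \<forall>\<phi>\<in>\<Phi>. dist (\<xi> (xs \<phi>)) (g (xs \<phi>)) < dist (\<phi> (xs \<phi>)) (g (xs \<phi>))) N"
    using fin by (rule eventually_ball_finite[rotated])
  then have "eventually (\<lambda>_. False) N"
  proof (rule eventually_mono[OF eventually_conj[OF ev]])
    fix \<xi> assume a: "restrict \<xi> U \<in> \<Phi> \<and> (\<forall>\<phi>\<in>\<Phi>. dist (\<xi> (xs \<phi>)) (g (xs \<phi>)) < dist (\<phi> (xs \<phi>)) (g (xs \<phi>)))"
    then have "dist (\<xi> (xs (restrict \<xi> U))) (g (xs (restrict \<xi> U))) < dist (restrict \<xi> U (xs (restrict \<xi> U))) (g (xs (restrict \<xi> U)))"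
      by blast
    moreover have "xs (restrict \<xi> U) \<in> U" using xs a by blast
    ultimately show False by simp
  qed
  then show False using N by (simp add: eventually_False)
qed

lemma finite_rels:
  assumes "finite S"
  shows "finite {r :: 'f \<Rightarrow> 'f \<Rightarrow> bool. \<forall>s s'. r s s' \<longrightarrow> s \<in> S \<and> s' \<in> S}"
proof -
  have "{r :: 'f \<Rightarrow> 'f \<Rightarrow> bool. \<forall>s s'. r s s' \<longrightarrow> s \<in> S \<and> s' \<in> S}
        \<subseteq> (\<lambda>P. \<lambda>s s'. (s, s') \<in> P) ` Pow (S \<times> S)"
  proof
    fix r assume "r \<in> {r :: 'f \<Rightarrow> 'f \<Rightarrow> bool. \<forall>s s'. r s s' \<longrightarrow> s \<in> S \<and> s' \<in> S}"
    then have "{(s,s'). r s s'} \<in> Pow (S \<times> S)" and "r = (\<lambda>s s'. (s, s') \<in> {(s,s'). r s s'})" by auto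
    then show "r \<in> (\<lambda>P. \<lambda>s s'. (s, s') \<in> P) ` Pow (S \<times> S)" by blast
  qed
  then show ?thesis using assms by (meson finite_Pow_iff finite_SigmaI finite_imageI finite_subset)
qed

locale joinloc =
  fixes T :: "'p topology" and F G :: "('p \<Rightarrow> real) set"
  assumes cF: "cont_dissection T F" and lF: "l_complete T F"
    and cG: "cont_dissection T G" and lG: "l_complete T G"
begin

definition good where "good U \<longleftrightarrow> openin T U \<and> finite ((\<lambda>\<xi>. restrict \<xi> U) ` F) \<and> finite ((\<lambda>\<xi>. restrict \<xi> U) ` G)"
definition SU where "SU U = (\<lambda>\<xi>. restrict \<xi> U) ` (F \<union> G)"
definition RU where "RU U x = (\<lambda>s s'. s \<in> SU U \<and> s' \<in> SU U \<and> s x \<le> s' x)"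
definition form where "form U h c \<longleftrightarrow> (\<forall>r. c r \<in> SU U) \<and> (\<forall>x\<in>U. h x = c (RU U x) x)"
definition H where "H = {h. continuous_map T euclideanreal h \<and> (\<forall>U. good U \<longrightarrow> (\<exists>c. form U h c))}"

lemma finSU: "good U \<Longrightarrow> finite (SU U)"
  unfolding good_def SU_def by (simp add: image_Un)

lemma good_exists:
  assumes "x \<in> topspace T" shows "\<exists>U. good U \<and> x \<in> U"
proof -
  obtain U1 where U1: "openin T U1" "x \<in> U1" "finite ((\<lambda>\<xi>. restrict \<xi> U1) ` F)"
    using cF assms unfolding cont_dissection_def by blast
  obtain U2 where U2: "openin T U2" "x \<in> U2" "finite ((\<lambda>\<xi>. restrict \<xi> U2) ` G)"
    using cG assms unfolding cont_dissection_def by blast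
  have e1: "(\<lambda>\<xi>. restrict \<xi> (U1 \<inter> U2)) ` F = (\<lambda>\<xi>. restrict \<xi> (U1 \<inter> U2)) ` (\<lambda>\<xi>. restrict \<xi> U1) ` F"
    by (auto simp: image_image restrict_def fun_eq_iff)
  have e2: "(\<lambda>\<xi>. restrict \<xi> (U1 \<inter> U2)) ` G = (\<lambda>\<xi>. restrict \<xi> (U1 \<inter> U2)) ` (\<lambda>\<xi>. restrict \<xi> U2) ` G"
    by (auto simp: image_image restrict_def fun_eq_iff)
  have "good (U1 \<inter> U2)" unfolding good_def using U1 U2 e1 e2 by auto
  then show ?thesis using U1 U2 by blast
qed

lemma good_sub: "good U \<Longrightarrow> U \<subseteq> topspace T"
  unfolding good_def by (simp add: openin_subset)

lemma finite_H_restr: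
  assumes g: "good U" shows "finite ((\<lambda>h. restrict h U) ` H)"
proof -
  let ?P = "PiE (RU U ` U) (\<lambda>_. SU U)"
  have fr: "finite (RU U ` U)"
  proof (rule finite_subset[OF _ finite_rels[OF finSU[OF g]]])
    show "RU U ` U \<subseteq> {r. \<forall>s s'. r s s' \<longrightarrow> s \<in> SU U \<and> s' \<in> SU U}" by (auto simp: RU_def)
  qed
  have "(\<lambda>h. restrict h U) ` H \<subseteq> (\<lambda>c. restrict (\<lambda>x. c (RU U x) x) U) ` ?P"
  proof
    fix k assume "k \<in> (\<lambda>h. restrict h U) ` H"
    then obtain h where h: "h \<in> H" "k = restrict h U" by blast
    then obtain c where c: "form U h c" using g unfolding H_def by blast
    have "restrict c (RU U ` U) \<in> ?P" using c unfolding form_def by auto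
    moreover have "k = restrict (\<lambda>x. restrict c (RU U ` U) (RU U x) x) U"
      using c h unfolding form_def by (auto simp: fun_eq_iff)
    ultimately show "k \<in> (\<lambda>c. restrict (\<lambda>x. c (RU U x) x) U) ` ?P" by blast
  qed
  moreover have "finite ?P" using fr finSU[OF g] by (simp add: finite_PiE)
  ultimately show ?thesis by (meson finite_imageI finite_subset)
qed

lemma F_sub: "F \<union> G \<subseteq> H"
proof
  fix \<xi> assume a: "\<xi> \<in> F \<union> G"
  have "continuous_map T euclideanreal \<xi>" using a cF cG unfolding cont_dissection_def by blast
  moreover have "form U \<xi> (\<lambda>_. restrict \<xi> U)" for U
    using a unfolding form_def SU_def by auto
  ultimately show "\<xi> \<in> H" unfolding H_def by blast
qed

lemma H_max: "h1 \<in> H \<Longrightarrow> h2 \<in> H \<Longrightarrow> (\<lambda>x. max (h1 x) (h2 x)) \<in> H"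
  unfolding H_def
proof (safe intro!: continuous_map_real_max)
  fix U assume g: "good U" and "\<forall>U. good U \<longrightarrow> (\<exists>c. form U h1 c)" "\<forall>U. good U \<longrightarrow> (\<exists>c. form U h2 c)"
  then obtain c1 c2 where c1: "form U h1 c1" and c2: "form U h2 c2" by blast
  show "\<exists>c. form U (\<lambda>x. max (h1 x) (h2 x)) c"
    by (rule exI[of _ "\<lambda>r. if r (c1 r) (c2 r) then c2 r else c1 r"])
       (use c1 c2 in \<open>auto simp: form_def RU_def max_def\<close>)
qed

lemma H_min: "h1 \<in> H \<Longrightarrow> h2 \<in> H \<Longrightarrow> (\<lambda>x. min (h1 x) (h2 x)) \<in> H"
  unfolding H_def
proof (safe intro!: continuous_map_real_min)
  fix U assume g: "good U" and "\<forall>U. good U \<longrightarrow> (\<exists>c. form U h1 c)" "\<forall>U. good U \<longrightarrow> (\<exists>c. form U h2 c)"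
  then obtain c1 c2 where c1: "form U h1 c1" and c2: "form U h2 c2" by blast
  show "\<exists>c. form U (\<lambda>x. min (h1 x) (h2 x)) c"
    by (rule exI[of _ "\<lambda>r. if r (c1 r) (c2 r) then c1 r else c2 r"])
       (use c1 c2 in \<open>auto simp: form_def RU_def min_def\<close>)
qed

lemma H_range:
  assumes "h \<in> H" "x \<in> topspace T" shows "h x \<in> {0..1}"
proof -
  obtain U where U: "good U" "x \<in> U" using good_exists assms by blast
  then obtain c where c: "form U h c" using assms unfolding H_def by blast
  then obtain \<xi> where "\<xi> \<in> F \<union> G" "c (RU U x) = restrict \<xi> U"
    unfolding form_def SU_def by blast
  then have "h x = \<xi> x" using c U unfolding form_def by auto
  moreover have "\<xi> x \<in> {0..1}" using \<open>\<xi> \<in> F \<union> G\<close> cF cG assms unfolding cont_dissection_def by blast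
  ultimately show ?thesis by simp
qed

lemma H_lim:
  assumes N: "N \<noteq> bot" and ev: "eventually (\<lambda>\<xi>. \<xi> \<in> H) N"
    and conv: "\<forall>x\<in>topspace T. ((\<lambda>\<xi>. \<xi> x) \<longlongrightarrow> g x) N"
  shows "g \<in> H"
proof -
  have loc: "\<exists>h\<in>H. \<forall>x\<in>U. h x = g x" if g: "good U" for U
  proof -
    have "\<exists>\<phi>\<in>(\<lambda>h. restrict h U) ` H. \<forall>x\<in>U. \<phi> x = g x"
      by (rule finite_sel[OF finite_H_restr[OF g] N])
         (use ev conv good_sub[OF g] in \<open>auto elim!: eventually_mono\<close>)
    then show ?thesis by auto
  qed
  then obtain hU where hU: "\<And>U. good U \<Longrightarrow> hU U \<in> H \<and> (\<forall>x\<in>U. hU U x = g x)" by metis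
  have cont: "continuous_map T euclideanreal g"
    unfolding continuous_map_def
  proof (intro conjI allI impI)
    show "g \<in> topspace T \<rightarrow> topspace euclideanreal" by simp
    fix V :: "real set" assume V: "openin euclideanreal V"
    have "{x \<in> topspace T. g x \<in> V} = \<Union> ((\<lambda>U. {x \<in> U. hU U x \<in> V}) ` {U. good U})"
    proof (intro equalityI subsetI)
      fix x assume "x \<in> {x \<in> topspace T. g x \<in> V}"
      then obtain U where "good U" "x \<in> U" "g x \<in> V" using good_exists by blast
      then show "x \<in> \<Union> ((\<lambda>U. {x \<in> U. hU U x \<in> V}) ` {U. good U})" using hU by auto
    next
      fix x assume "x \<in> \<Union> ((\<lambda>U. {x \<in> U. hU U x \<in> V}) ` {U. good U})"
      then show "x \<in> {x \<in> topspace T. g x \<in> V}" using hU good_sub by fastforce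
    qed
    moreover have "openin T {x \<in> U. hU U x \<in> V}" if "good U" for U
      using openin_continuous_map_preimage_gen[of T euclideanreal "hU U" U V] hU[OF that] that V
      unfolding H_def good_def by auto
    ultimately show "openin T {x \<in> topspace T. g x \<in> V}" by auto
  qed
  have "\<exists>c. form U g c" if g: "good U" for U
  proof -
    obtain c where "form U (hU U) c" using hU[OF g] g unfolding H_def by blast
    then have "form U g c" using hU[OF g] unfolding form_def by auto
    then show ?thesis by blast
  qed
  then show ?thesis using cont unfolding H_def by blast
qed

lemma join_ok: "cont_dissection T H \<and> l_complete T H \<and> F \<subseteq> H \<and> G \<subseteq> H"
proof (intro conjI)
  show "F \<subseteq> H" "G \<subseteq> H" using F_sub by auto
  have "\<forall>\<xi>\<in>H. continuous_map T euclideanreal \<xi> \<and> \<xi> ` topspace T \<subseteq> {0..1}"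
  proof
    fix \<xi> assume a: "\<xi> \<in> H"
    have "continuous_map T euclideanreal \<xi>" using a unfolding H_def by blast
    moreover have "\<xi> ` topspace T \<subseteq> {0..1}" using H_range[OF a] by blast
    ultimately show "continuous_map T euclideanreal \<xi> \<and> \<xi> ` topspace T \<subseteq> {0..1}" by blast
  qed
  moreover have "\<exists>\<xi>\<in>H. \<forall>x\<in>topspace T. \<xi> x = 0" "\<exists>\<xi>\<in>H. \<forall>x\<in>topspace T. \<xi> x = 1"
  proof -
    obtain a b where "a \<in> F" "\<forall>x\<in>topspace T. a x = 0" "b \<in> F" "\<forall>x\<in>topspace T. b x = 1"
      using cF unfolding cont_dissection_def by meson
    then show "\<exists>\<xi>\<in>H. \<forall>x\<in>topspace T. \<xi> x = 0" "\<exists>\<xi>\<in>H. \<forall>x\<in>topspace T. \<xi> x = 1"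
      using F_sub by blast+
  qed
  moreover have "\<forall>x\<in>topspace T. \<exists>U. openin T U \<and> x \<in> U \<and> finite ((\<lambda>\<xi>. restrict \<xi> U) ` H)"
  proof
    fix x assume "x \<in> topspace T"
    then obtain U where "good U" "x \<in> U" using good_exists by blast
    then show "\<exists>U. openin T U \<and> x \<in> U \<and> finite ((\<lambda>\<xi>. restrict \<xi> U) ` H)"
      using finite_H_restr unfolding good_def by blast
  qed
  ultimately show "cont_dissection T H" unfolding cont_dissection_def by (intro conjI)
  have "\<forall>\<xi>1\<in>H. \<forall>\<xi>2\<in>H. \<exists>\<eta>\<in>H. \<forall>x\<in>topspace T. \<eta> x = max (\<xi>1 x) (\<xi>2 x)"
  proof (intro ballI)
    fix a b assume ab: "a \<in> H" "b \<in> H"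
    show "\<exists>\<eta>\<in>H. \<forall>x\<in>topspace T. \<eta> x = max (a x) (b x)"
      by (rule bexI[OF _ H_max[OF ab]]) simp
  qed
  moreover have "\<forall>\<xi>1\<in>H. \<forall>\<xi>2\<in>H. \<exists>\<eta>\<in>H. \<forall>x\<in>topspace T. \<eta> x = min (\<xi>1 x) (\<xi>2 x)"
  proof (intro ballI)
    fix a b assume ab: "a \<in> H" "b \<in> H"
    show "\<exists>\<eta>\<in>H. \<forall>x\<in>topspace T. \<eta> x = min (a x) (b x)"
      by (rule bexI[OF _ H_min[OF ab]]) simp
  qed
  moreover have "\<forall>(N :: ('p \<Rightarrow> real) filter) g. N \<noteq> bot \<and> eventually (\<lambda>\<xi>. \<xi> \<in> H) N \<and>
        (\<forall>x\<in>topspace T. ((\<lambda>\<xi>. \<xi> x) \<longlongrightarrow> g x) N)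
        \<longrightarrow> (\<exists>\<eta>\<in>H. \<forall>x\<in>topspace T. \<eta> x = g x)"
  proof (intro allI impI)
    fix N :: "('p \<Rightarrow> real) filter" and g
    assume "N \<noteq> bot \<and> eventually (\<lambda>\<xi>. \<xi> \<in> H) N \<and> (\<forall>x\<in>topspace T. ((\<lambda>\<xi>. \<xi> x) \<longlongrightarrow> g x) N)"
    then have "g \<in> H" using H_lim by meson
    then show "\<exists>\<eta>\<in>H. \<forall>x\<in>topspace T. \<eta> x = g x" by blast
  qed
  ultimately show "l_complete T H" unfolding l_complete_def by (intro conjI)
qed

end

lemma join_exists:
  assumes "cont_dissection T F" "l_complete T F" "cont_dissection T G" "l_complete T G"
  shows "\<exists>H. cont_dissection T H \<and> l_complete T H \<and> F \<subseteq> H \<and> G \<subseteq> H"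
  using joinloc.join_ok[OF joinloc.intro[OF assms]] by blast

lemma vals_finite:
  assumes "cont_dissection T F" "x \<in> topspace T"
  shows "finite ((\<lambda>\<xi>. \<xi> x) ` F)"
proof -
  obtain U where U: "x \<in> U" "finite ((\<lambda>\<xi>. restrict \<xi> U) ` F)"
    using assms unfolding cont_dissection_def by blast
  have "(\<lambda>\<xi>. \<xi> x) ` F = (\<lambda>r. r x) ` (\<lambda>\<xi>. restrict \<xi> U) ` F"
    using U by (auto simp: image_image)
  then show ?thesis using U by simp
qed

lemma lc_max: "l_complete T F \<Longrightarrow> a \<in> F \<Longrightarrow> b \<in> F \<Longrightarrow> \<exists>m\<in>F. \<forall>y\<in>topspace T. m y = max (a y) (b y)"
  unfolding l_complete_def by blast
lemma lc_min: "l_complete T F \<Longrightarrow> a \<in> F \<Longrightarrow> b \<in> F \<Longrightarrow> \<exists>m\<in>F. \<forall>y\<in>topspace T. m y = min (a y) (b y)"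
  unfolding l_complete_def by blast

lemma lower_exists:
  assumes cF: "cont_dissection T F" and lF: "l_complete T F"
    and x: "x \<in> topspace T" and t: "0 < t"
  shows "\<exists>lo\<in>F. lo x < t \<and> (\<forall>\<xi>\<in>F. \<xi> x < t \<longrightarrow> (\<forall>y\<in>topspace T. \<xi> y \<le> lo y))"
proof -
  define Bs where "Bs = {\<xi>\<in>F. \<xi> x < t}"
  define S where "S \<xi> = {\<eta>\<in>Bs. \<forall>y\<in>topspace T. \<xi> y \<le> \<eta> y}" for \<xi>
  define N where "N = (INF \<xi>\<in>Bs. principal (S \<xi>))"
  define g where "g y = Sup ((\<lambda>\<xi>. \<xi> y) ` Bs)" for y
  obtain z where z: "z \<in> F" "\<forall>y\<in>topspace T. z y = 0" using cF unfolding cont_dissection_def by blast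
  have zB: "z \<in> Bs" using z x t unfolding Bs_def by auto
  have Bne: "Bs \<noteq> {}" using zB by blast
  have range: "\<And>\<xi> y. \<xi> \<in> F \<Longrightarrow> y \<in> topspace T \<Longrightarrow> \<xi> y \<in> {0..1}"
    using cF unfolding cont_dissection_def by blast
  have dir: "\<exists>m\<in>Bs. principal (S m) \<le> inf (principal (S a)) (principal (S b))"
    if ab: "a \<in> Bs" "b \<in> Bs" for a b
  proof -
    obtain m where m: "m \<in> F" "\<forall>y\<in>topspace T. m y = max (a y) (b y)"
      using lc_max[OF lF, of a b] ab unfolding Bs_def by blast
    have "m \<in> Bs" using m ab x unfolding Bs_def by auto
    moreover have "S m \<subseteq> S a \<inter> S b" using m unfolding S_def by auto
    ultimately show ?thesis by (auto simp: inf_principal)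
  qed
  have evN: "eventually P N \<longleftrightarrow> (\<exists>b\<in>Bs. eventually P (principal (S b)))" for P
    unfolding N_def by (rule eventually_INF_base[OF Bne dir]) auto
  have Nbot: "N \<noteq> bot"
  proof
    assume "N = bot"
    then have "eventually (\<lambda>_. False) N" by simp
    then obtain b where "b \<in> Bs" "eventually (\<lambda>_. False) (principal (S b))" using evN by blast
    moreover have "b \<in> S b" using \<open>b \<in> Bs\<close> unfolding S_def by auto
    ultimately show False by (auto simp: eventually_principal)
  qed
  have evB: "eventually (\<lambda>\<xi>. \<xi> \<in> F) N"
    using evN zB by (auto simp: eventually_principal S_def Bs_def)
  have bdd: "bdd_above ((\<lambda>\<xi>. \<xi> y) ` Bs)" if "y \<in> topspace T" for y
    using range that unfolding Bs_def by (auto intro!: bdd_aboveI[of _ 1])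
  have conv: "\<forall>y\<in>topspace T. ((\<lambda>\<xi>. \<xi> y) \<longlongrightarrow> g y) N"
  proof
    fix y assume y: "y \<in> topspace T"
    show "((\<lambda>\<xi>. \<xi> y) \<longlongrightarrow> g y) N"
    proof (rule tendstoI)
      fix e :: real assume e: "e > 0"
      obtain \<xi>0 where \<xi>0: "\<xi>0 \<in> Bs" "g y - e < \<xi>0 y"
        using less_cSupD[of "(\<lambda>\<xi>. \<xi> y) ` Bs" "g y - e"] Bne e unfolding g_def by auto
      have "eventually (\<lambda>\<xi>. dist (\<xi> y) (g y) < e) (principal (S \<xi>0))"
        unfolding eventually_principal
      proof
        fix \<eta> assume "\<eta> \<in> S \<xi>0"
        then have "\<eta> \<in> Bs" "\<xi>0 y \<le> \<eta> y" using y unfolding S_def by auto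
        moreover have "\<eta> y \<le> g y" unfolding g_def using bdd[OF y] \<open>\<eta> \<in> Bs\<close> by (auto intro: cSup_upper)
        ultimately show "dist (\<eta> y) (g y) < e" using \<xi>0 by (auto simp: dist_real_def)
      qed
      then show "eventually (\<lambda>\<xi>. dist (\<xi> y) (g y) < e) N" using evN \<xi>0 by blast
    qed
  qed
  obtain lo where lo: "lo \<in> F" "\<forall>y\<in>topspace T. lo y = g y"
    using lF Nbot evB conv unfolding l_complete_def by blast
  have fin: "finite ((\<lambda>\<xi>. \<xi> x) ` Bs)"
    using vals_finite[OF cF x] by (rule finite_subset[rotated]) (auto simp: Bs_def)
  have "g x \<in> (\<lambda>\<xi>. \<xi> x) ` Bs" unfolding g_def using fin Bne by (simp add: cSup_eq_Max)
  then have "g x < t" unfolding Bs_def by auto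
  moreover have "\<forall>\<xi>\<in>F. \<xi> x < t \<longrightarrow> (\<forall>y\<in>topspace T. \<xi> y \<le> lo y)"
    using lo bdd unfolding g_def Bs_def by (auto intro!: cSup_upper)
  ultimately show ?thesis using lo x by (intro bexI[of _ lo]) auto
qed

lemma upper_exists:
  assumes cF: "cont_dissection T F" and lF: "l_complete T F"
    and x: "x \<in> topspace T" and t: "t \<le> 1"
  shows "\<exists>up\<in>F. t \<le> up x \<and> (\<forall>\<xi>\<in>F. t \<le> \<xi> x \<longrightarrow> (\<forall>y\<in>topspace T. up y \<le> \<xi> y))"
proof -
  define Bs where "Bs = {\<xi>\<in>F. t \<le> \<xi> x}"
  define S where "S \<xi> = {\<eta>\<in>Bs. \<forall>y\<in>topspace T. \<eta> y \<le> \<xi> y}" for \<xi>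
  define N where "N = (INF \<xi>\<in>Bs. principal (S \<xi>))"
  define g where "g y = Inf ((\<lambda>\<xi>. \<xi> y) ` Bs)" for y
  obtain z where z: "z \<in> F" "\<forall>y\<in>topspace T. z y = 1" using cF unfolding cont_dissection_def by blast
  have zB: "z \<in> Bs" using z x t unfolding Bs_def by auto
  have Bne: "Bs \<noteq> {}" using zB by blast
  have range: "\<And>\<xi> y. \<xi> \<in> F \<Longrightarrow> y \<in> topspace T \<Longrightarrow> \<xi> y \<in> {0..1}"
    using cF unfolding cont_dissection_def by blast
  have dir: "\<exists>m\<in>Bs. principal (S m) \<le> inf (principal (S a)) (principal (S b))"
    if ab: "a \<in> Bs" "b \<in> Bs" for a b
  proof -
    obtain m where m: "m \<in> F" "\<forall>y\<in>topspace T. m y = min (a y) (b y)"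
      using lc_min[OF lF, of a b] ab unfolding Bs_def by blast
    have "m \<in> Bs" using m ab x unfolding Bs_def by auto
    moreover have "S m \<subseteq> S a \<inter> S b" using m unfolding S_def by auto
    ultimately show ?thesis by (auto simp: inf_principal)
  qed
  have evN: "eventually P N \<longleftrightarrow> (\<exists>b\<in>Bs. eventually P (principal (S b)))" for P
    unfolding N_def by (rule eventually_INF_base[OF Bne dir]) auto
  have Nbot: "N \<noteq> bot"
  proof
    assume "N = bot"
    then have "eventually (\<lambda>_. False) N" by simp
    then obtain b where "b \<in> Bs" "eventually (\<lambda>_. False) (principal (S b))" using evN by blast
    moreover have "b \<in> S b" using \<open>b \<in> Bs\<close> unfolding S_def by auto
    ultimately show False by (auto simp: eventually_principal)
  qed
  have evB: "eventually (\<lambda>\<xi>. \<xi> \<in> F) N"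
    using evN zB by (auto simp: eventually_principal S_def Bs_def)
  have bdd: "bdd_below ((\<lambda>\<xi>. \<xi> y) ` Bs)" if "y \<in> topspace T" for y
    using range that unfolding Bs_def by (auto intro!: bdd_belowI[of _ 0])
  have conv: "\<forall>y\<in>topspace T. ((\<lambda>\<xi>. \<xi> y) \<longlongrightarrow> g y) N"
  proof
    fix y assume y: "y \<in> topspace T"
    show "((\<lambda>\<xi>. \<xi> y) \<longlongrightarrow> g y) N"
    proof (rule tendstoI)
      fix e :: real assume e: "e > 0"
      obtain \<xi>0 where \<xi>0: "\<xi>0 \<in> Bs" "\<xi>0 y < g y + e"
        using cInf_lessD[of "(\<lambda>\<xi>. \<xi> y) ` Bs" "g y + e"] Bne e unfolding g_def by auto
      have "eventually (\<lambda>\<xi>. dist (\<xi> y) (g y) < e) (principal (S \<xi>0))"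
        unfolding eventually_principal
      proof
        fix \<eta> assume "\<eta> \<in> S \<xi>0"
        then have "\<eta> \<in> Bs" "\<eta> y \<le> \<xi>0 y" using y unfolding S_def by auto
        moreover have "g y \<le> \<eta> y" unfolding g_def using bdd[OF y] \<open>\<eta> \<in> Bs\<close> by (auto intro: cInf_lower)
        ultimately show "dist (\<eta> y) (g y) < e" using \<xi>0 by (auto simp: dist_real_def)
      qed
      then show "eventually (\<lambda>\<xi>. dist (\<xi> y) (g y) < e) N" using evN \<xi>0 by blast
    qed
  qed
  obtain up where up: "up \<in> F" "\<forall>y\<in>topspace T. up y = g y"
    using lF Nbot evB conv unfolding l_complete_def by blast
  have fin: "finite ((\<lambda>\<xi>. \<xi> x) ` Bs)"
    using vals_finite[OF cF x] by (rule finite_subset[rotated]) (auto simp: Bs_def)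
  have "g x \<in> (\<lambda>\<xi>. \<xi> x) ` Bs" unfolding g_def using fin Bne by (simp add: cInf_eq_Min)
  then have "t \<le> g x" unfolding Bs_def by auto
  moreover have "\<forall>\<xi>\<in>F. t \<le> \<xi> x \<longrightarrow> (\<forall>y\<in>topspace T. up y \<le> \<xi> y)"
    using up bdd unfolding g_def Bs_def by (auto intro!: cInf_lower)
  ultimately show ?thesis using up x by (intro bexI[of _ up]) auto
qed

lemma cross_lo:
  assumes lF: "l_complete T F" and lo: "lo \<in> F" and up: "up \<in> F"
    and x: "x \<in> topspace T" and lox: "lo x < t" and upx: "t \<le> up x"
    and upmin: "\<forall>\<xi>\<in>F. t \<le> \<xi> x \<longrightarrow> (\<forall>y\<in>topspace T. up y \<le> \<xi> y)"
    and x': "x' \<in> topspace T" and lox': "lo x' < t'" and upx': "t' \<le> up x'"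
    and \<xi>: "\<xi> \<in> F" "\<xi> x' < t'"
    and lomax: "\<forall>\<xi>\<in>F. \<xi> x < t \<longrightarrow> (\<forall>y\<in>topspace T. \<xi> y \<le> lo y)"
  shows "\<forall>y\<in>topspace T. \<xi> y \<le> lo y"
proof (cases "\<xi> x < t")
  case True then show ?thesis using lomax \<xi> by blast
next
  case False
  obtain m where m: "m \<in> F" "\<forall>y\<in>topspace T. m y = max (\<xi> y) (lo y)"
    using lc_max[OF lF \<xi>(1) lo] by blast
  obtain w where w: "w \<in> F" "\<forall>y\<in>topspace T. w y = min (m y) (up y)"
    using lc_min[OF lF m(1) up] by blast
  have "t \<le> w x" using w m x False upx by auto
  then have "up x' \<le> w x'" using upmin w x' by blast
  moreover have "w x' < t'" using w m x' \<xi> lox' by auto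
  ultimately show ?thesis using upx' by linarith
qed

lemma cross_up:
  assumes lF: "l_complete T F" and lo: "lo \<in> F" and up: "up \<in> F"
    and x: "x \<in> topspace T" and lox: "lo x < t" and upx: "t \<le> up x"
    and lomax: "\<forall>\<xi>\<in>F. \<xi> x < t \<longrightarrow> (\<forall>y\<in>topspace T. \<xi> y \<le> lo y)"
    and x': "x' \<in> topspace T" and lox': "lo x' < t'" and upx': "t' \<le> up x'"
    and \<xi>: "\<xi> \<in> F" "t' \<le> \<xi> x'"
    and upmin: "\<forall>\<xi>\<in>F. t \<le> \<xi> x \<longrightarrow> (\<forall>y\<in>topspace T. up y \<le> \<xi> y)"
  shows "\<forall>y\<in>topspace T. up y \<le> \<xi> y"
proof (cases "t \<le> \<xi> x")
  case True then show ?thesis using upmin \<xi> by blast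
next
  case False
  obtain m where m: "m \<in> F" "\<forall>y\<in>topspace T. m y = min (\<xi> y) (up y)"
    using lc_min[OF lF \<xi>(1) up] by blast
  obtain w where w: "w \<in> F" "\<forall>y\<in>topspace T. w y = max (m y) (lo y)"
    using lc_max[OF lF m(1) lo] by blast
  have "w x < t" using w m x False lox by auto
  then have "w x' \<le> lo x'" using lomax w x' by blast
  moreover have "t' \<le> w x'" using w m x' \<xi> upx' by auto
  ultimately show ?thesis using lox' by linarith
qed

definition mw :: "(nat \<Rightarrow> 'a topology) \<Rightarrow> nat \<Rightarrow> (nat \<Rightarrow> (nat \<Rightarrow> 'a) \<Rightarrow> real) \<Rightarrow> (nat \<Rightarrow> (nat \<Rightarrow> 'a) \<Rightarrow> real)
   \<Rightarrow> ((nat \<Rightarrow> 'a) \<times> (nat \<Rightarrow> real)) set" where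
  "mw Xs p \<xi>1 \<xi>2 = {(x, t) \<in> dom_layer Xs p.
               \<forall>i<p. (restrict x {..<Suc i}, t i) \<in> wedge (Xle Xs (Suc i)) (\<xi>1 i) (\<xi>2 i)}"

lemma multiwedge_mw: "multiwedge Xs p Fs M \<longleftrightarrow> (\<exists>\<xi>1 \<xi>2. (\<forall>i<p. \<xi>1 i \<in> Fs i \<and> \<xi>2 i \<in> Fs i) \<and> M = mw Xs p \<xi>1 \<xi>2)"
  unfolding multiwedge_def mw_def by simp

lemma restr_top:
  assumes "x \<in> topspace (Xle Xs p)" "i < p"
  shows "restrict x {..<Suc i} \<in> topspace (Xle Xs (Suc i))"
  using assms unfolding Xle_def by (auto simp: topspace_product_topology PiE_iff)

lemma cover:
  assumes asc: "ascending_lc Xs p Fs" and z: "z \<in> dom_layer Xs p"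
  shows "\<exists>M. minimal_multiwedge Xs p Fs M \<and> z \<in> M"
proof -
  obtain x t where zxt: "z = (x, t)" by (cases z)
  have x: "x \<in> topspace (Xle Xs p)" and t: "t \<in> PiE {..<p} (\<lambda>_. Iint)"
  proof -
    have "(x, t) \<in> topspace (Xle Xs p) \<times> PiE {..<p} (\<lambda>_. Iint)" using z unfolding zxt dom_layer_def .
    then show "x \<in> topspace (Xle Xs p)" "t \<in> PiE {..<p} (\<lambda>_. Iint)" by (simp_all add: mem_Times_iff)
  qed
  let ?T = "\<lambda>i. Xle Xs (Suc i)" and ?x = "\<lambda>i. restrict x {..<Suc i}"
  have xi: "?x i \<in> topspace (?T i)" if "i < p" for i using restr_top[OF x that] .
  have ti: "0 < t i \<and> t i \<le> 1" if "i < p" for i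
  proof -
    have "t i \<in> Iint" using t that by (simp add: PiE_iff)
    then show ?thesis unfolding Iint_def by simp
  qed
  define P where "P i lu \<longleftrightarrow> (fst lu \<in> Fs i \<and> fst lu (?x i) < t i \<and>
          (\<forall>\<xi>\<in>Fs i. \<xi> (?x i) < t i \<longrightarrow> (\<forall>y\<in>topspace (?T i). \<xi> y \<le> fst lu y)) \<and>
          snd lu \<in> Fs i \<and> t i \<le> snd lu (?x i) \<and>
          (\<forall>\<xi>\<in>Fs i. t i \<le> \<xi> (?x i) \<longrightarrow> (\<forall>y\<in>topspace (?T i). snd lu y \<le> \<xi> y)))" for i lu
  have "\<forall>i. \<exists>lu. i < p \<longrightarrow> P i lu"
  proof (intro allI)
    fix i show "\<exists>lu. i < p \<longrightarrow> P i lu"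
    proof (cases "i < p")
      case True
      have c: "cont_dissection (?T i) (Fs i)" "l_complete (?T i) (Fs i)"
        using asc True unfolding ascending_lc_def by blast+
      obtain lo where "lo \<in> Fs i" "lo (?x i) < t i" "\<forall>\<xi>\<in>Fs i. \<xi> (?x i) < t i \<longrightarrow> (\<forall>y\<in>topspace (?T i). \<xi> y \<le> lo y)"
        using lower_exists[OF c(1) c(2) xi[OF True]] ti[OF True] by blast
      moreover obtain up where "up \<in> Fs i" "t i \<le> up (?x i)" "\<forall>\<xi>\<in>Fs i. t i \<le> \<xi> (?x i) \<longrightarrow> (\<forall>y\<in>topspace (?T i). up y \<le> \<xi> y)"
        using upper_exists[OF c(1) c(2) xi[OF True]] ti[OF True] by blast
      ultimately have "P i (lo, up)" unfolding P_def by simp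
      then show ?thesis by blast
    next
      case False then show ?thesis by blast
    qed
  qed
  then obtain lu where lu0: "\<forall>i. i < p \<longrightarrow> P i (lu i)" by (rule choice[THEN exE])
  define lo where "lo i = fst (lu i)" for i
  define up where "up i = snd (lu i)" for i
  have lu: "lo i \<in> Fs i" "lo i (?x i) < t i"
          "\<forall>\<xi>\<in>Fs i. \<xi> (?x i) < t i \<longrightarrow> (\<forall>y\<in>topspace (?T i). \<xi> y \<le> lo i y)"
          "up i \<in> Fs i" "t i \<le> up i (?x i)"
          "\<forall>\<xi>\<in>Fs i. t i \<le> \<xi> (?x i) \<longrightarrow> (\<forall>y\<in>topspace (?T i). up i y \<le> \<xi> y)"
    if i: "i < p" for i
  proof -
    have "P i (lu i)" using lu0 i by blast
    then show "lo i \<in> Fs i" "lo i (?x i) < t i"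
          "\<forall>\<xi>\<in>Fs i. \<xi> (?x i) < t i \<longrightarrow> (\<forall>y\<in>topspace (?T i). \<xi> y \<le> lo i y)"
          "up i \<in> Fs i" "t i \<le> up i (?x i)"
          "\<forall>\<xi>\<in>Fs i. t i \<le> \<xi> (?x i) \<longrightarrow> (\<forall>y\<in>topspace (?T i). up i y \<le> \<xi> y)"
      unfolding P_def lo_def up_def by blast+
  qed
  define M where "M = mw Xs p lo up"
  have mwM: "multiwedge Xs p Fs M" unfolding multiwedge_mw M_def
    by (rule exI[of _ lo], rule exI[of _ up]) (use lu in blast)
  have zM: "z \<in> M"
  proof -
    have "\<forall>i<p. (?x i, t i) \<in> wedge (?T i) (lo i) (up i)"
      using lu xi ti unfolding wedge_def Iint_def by simp
    then show ?thesis unfolding M_def mw_def using z zxt by simp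
  qed
  have "M' = M" if M': "multiwedge Xs p Fs M'" "M' \<noteq> {}" "M' \<subseteq> M" for M'
  proof -
    obtain \<xi>1 \<xi>2 where \<xi>: "\<forall>i<p. \<xi>1 i \<in> Fs i \<and> \<xi>2 i \<in> Fs i" "M' = mw Xs p \<xi>1 \<xi>2"
      using M'(1) unfolding multiwedge_mw by blast
    obtain x' t' where z': "(x', t') \<in> M'" using M'(2) by auto
    have z'M: "(x', t') \<in> M" using z' M'(3) by blast
    have "M \<subseteq> M'"
    proof
      fix w assume wM: "w \<in> M"
      obtain y s where wys: "w = (y, s)" by (cases w)
      have "\<forall>i<p. (restrict y {..<Suc i}, s i) \<in> wedge (?T i) (\<xi>1 i) (\<xi>2 i)"
      proof (intro allI impI)
        fix i assume i: "i < p"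
        have c: "l_complete (?T i) (Fs i)" using asc i unfolding ascending_lc_def by auto
        have yi: "(restrict y {..<Suc i}, s i) \<in> wedge (?T i) (lo i) (up i)"
          using wM wys i unfolding M_def mw_def by auto
        have x'i: "(restrict x' {..<Suc i}, t' i) \<in> wedge (?T i) (lo i) (up i)"
          using z'M i unfolding M_def mw_def by auto
        have x'i2: "(restrict x' {..<Suc i}, t' i) \<in> wedge (?T i) (\<xi>1 i) (\<xi>2 i)"
          using z' i unfolding \<xi>(2) mw_def by auto
        note L = lu[OF i]
        have W: "restrict x' {..<Suc i} \<in> topspace (?T i)" "lo i (restrict x' {..<Suc i}) < t' i"
             "t' i \<le> up i (restrict x' {..<Suc i})"
          using x'i unfolding wedge_def by auto
        have W2: "\<xi>1 i (restrict x' {..<Suc i}) < t' i" "t' i \<le> \<xi>2 i (restrict x' {..<Suc i})"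
          using x'i2 unfolding wedge_def by auto
        have E: "\<xi>1 i \<in> Fs i" "\<xi>2 i \<in> Fs i" using \<xi>(1) i by auto
        have A: "\<forall>y\<in>topspace (?T i). \<xi>1 i y \<le> lo i y"
          by (rule cross_lo[OF c L(1) L(4) xi[OF i] L(2) L(5) L(6) W E(1) W2(1) L(3)])
        have B: "\<forall>y\<in>topspace (?T i). up i y \<le> \<xi>2 i y"
          by (rule cross_up[OF c L(1) L(4) xi[OF i] L(2) L(5) L(3) W E(2) W2(2) L(6)])
        show "(restrict y {..<Suc i}, s i) \<in> wedge (?T i) (\<xi>1 i) (\<xi>2 i)"
          using yi A B unfolding wedge_def by force
      qed
      then show "w \<in> M'" using wM wys unfolding \<xi>(2) M_def mw_def by auto
    qed
    then show ?thesis using M'(3) by blast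
  qed
  then have "minimal_multiwedge Xs p Fs M" unfolding minimal_multiwedge_def using mwM zM by blast
  then show ?thesis using zM by blast
qed

lemma mw_sub_dom: "mw Xs p a b \<subseteq> dom_layer Xs p" unfolding mw_def by auto

lemma refine:
  assumes ascF: "ascending_lc Xs p Fs" and ascH: "ascending_lc Xs p Hs"
    and sub: "\<forall>i<p. Fs i \<subseteq> Hs i"
    and const: "\<forall>M. minimal_multiwedge Xs p Fs M \<longrightarrow> (\<exists>c. \<forall>z\<in>M. \<gamma> z = c)"
    and M: "minimal_multiwedge Xs p Hs M"
  shows "\<exists>c. \<forall>z\<in>M. \<gamma> z = c"
proof -
  obtain b1 b2 where b: "\<forall>i<p. b1 i \<in> Hs i \<and> b2 i \<in> Hs i" "M = mw Xs p b1 b2"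
    using M unfolding minimal_multiwedge_def multiwedge_mw by blast
  obtain z0 where z0: "z0 \<in> M" using M unfolding minimal_multiwedge_def by blast
  have z0d: "z0 \<in> dom_layer Xs p" using z0 b mw_sub_dom by blast
  obtain C where C: "minimal_multiwedge Xs p Fs C" "z0 \<in> C" using cover[OF ascF z0d] by blast
  obtain a1 a2 where a: "\<forall>i<p. a1 i \<in> Fs i \<and> a2 i \<in> Fs i" "C = mw Xs p a1 a2"
    using C(1) unfolding minimal_multiwedge_def multiwedge_mw by blast
  have lH: "l_complete (Xle Xs (Suc i)) (Hs i)" if "i < p" for i
    using ascH that unfolding ascending_lc_def by blast
  have "\<forall>i. \<exists>m. i < p \<longrightarrow> m \<in> Hs i \<and> (\<forall>y\<in>topspace (Xle Xs (Suc i)). m y = max (a1 i y) (b1 i y))"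
  proof
    fix i show "\<exists>m. i < p \<longrightarrow> m \<in> Hs i \<and> (\<forall>y\<in>topspace (Xle Xs (Suc i)). m y = max (a1 i y) (b1 i y))"
    proof (cases "i < p")
      case True
      then have "a1 i \<in> Hs i" "b1 i \<in> Hs i" using a b sub by blast+
      then show ?thesis using lc_max[OF lH[OF True]] by blast
    qed blast
  qed
  then obtain c1 where c1: "\<forall>i. i < p \<longrightarrow> c1 i \<in> Hs i \<and> (\<forall>y\<in>topspace (Xle Xs (Suc i)). c1 i y = max (a1 i y) (b1 i y))"
    by (rule choice[THEN exE])
  have "\<forall>i. \<exists>m. i < p \<longrightarrow> m \<in> Hs i \<and> (\<forall>y\<in>topspace (Xle Xs (Suc i)). m y = min (a2 i y) (b2 i y))"
  proof
    fix i show "\<exists>m. i < p \<longrightarrow> m \<in> Hs i \<and> (\<forall>y\<in>topspace (Xle Xs (Suc i)). m y = min (a2 i y) (b2 i y))"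
    proof (cases "i < p")
      case True
      then have "a2 i \<in> Hs i" "b2 i \<in> Hs i" using a b sub by blast+
      then show ?thesis using lc_min[OF lH[OF True]] by blast
    qed blast
  qed
  then obtain c2 where c2: "\<forall>i. i < p \<longrightarrow> c2 i \<in> Hs i \<and> (\<forall>y\<in>topspace (Xle Xs (Suc i)). c2 i y = min (a2 i y) (b2 i y))"
    by (rule choice[THEN exE])
  have eq: "mw Xs p c1 c2 = M \<inter> C"
  proof (intro equalityI subsetI)
    fix w assume w: "w \<in> mw Xs p c1 c2"
    obtain x t where wxt: "w = (x, t)" by (cases w)
    have d: "(x, t) \<in> dom_layer Xs p" using w wxt mw_sub_dom by blast
    have "\<forall>i<p. (restrict x {..<Suc i}, t i) \<in> wedge (Xle Xs (Suc i)) (a1 i) (a2 i) \<and>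
                (restrict x {..<Suc i}, t i) \<in> wedge (Xle Xs (Suc i)) (b1 i) (b2 i)"
    proof (intro allI impI)
      fix i assume i: "i < p"
      have "(restrict x {..<Suc i}, t i) \<in> wedge (Xle Xs (Suc i)) (c1 i) (c2 i)"
        using w wxt i unfolding mw_def by auto
      then show "(restrict x {..<Suc i}, t i) \<in> wedge (Xle Xs (Suc i)) (a1 i) (a2 i) \<and>
                (restrict x {..<Suc i}, t i) \<in> wedge (Xle Xs (Suc i)) (b1 i) (b2 i)"
        using c1 c2 i unfolding wedge_def by auto
    qed
    then show "w \<in> M \<inter> C" using d wxt unfolding a(2) b(2) mw_def by auto
  next
    fix w assume w: "w \<in> M \<inter> C"
    obtain x t where wxt: "w = (x, t)" by (cases w)
    have d: "(x, t) \<in> dom_layer Xs p" using w wxt b mw_sub_dom by blast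
    have "\<forall>i<p. (restrict x {..<Suc i}, t i) \<in> wedge (Xle Xs (Suc i)) (c1 i) (c2 i)"
    proof (intro allI impI)
      fix i assume i: "i < p"
      have "(restrict x {..<Suc i}, t i) \<in> wedge (Xle Xs (Suc i)) (a1 i) (a2 i)"
           "(restrict x {..<Suc i}, t i) \<in> wedge (Xle Xs (Suc i)) (b1 i) (b2 i)"
        using w wxt i unfolding a(2) b(2) mw_def by auto
      then show "(restrict x {..<Suc i}, t i) \<in> wedge (Xle Xs (Suc i)) (c1 i) (c2 i)"
        using c1 c2 i unfolding wedge_def by auto
    qed
    then show "w \<in> mw Xs p c1 c2" using d wxt unfolding mw_def by auto
  qed
  have "multiwedge Xs p Hs (M \<inter> C)" unfolding multiwedge_mw
    by (rule exI[of _ c1], rule exI[of _ c2]) (use c1 c2 eq in auto)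
  moreover have "M \<inter> C \<noteq> {}" using z0 C by blast
  ultimately have "M \<inter> C = M" using M unfolding minimal_multiwedge_def by blast
  then have "M \<subseteq> C" by blast
  moreover obtain c where "\<forall>z\<in>C. \<gamma> z = c" using const C by blast
  ultimately show ?thesis by blast
qed

lemma layered_comb:
  assumes l1: "layered Xs p \<gamma>1" and l2: "layered Xs p \<gamma>2"
  shows "layered Xs p (\<lambda>z. \<Phi> (\<gamma>1 z) (\<gamma>2 z))"
proof -
  obtain Fs where F: "ascending_lc Xs p Fs" "\<forall>M. minimal_multiwedge Xs p Fs M \<longrightarrow> (\<exists>c. \<forall>z\<in>M. \<gamma>1 z = c)"
    using l1 unfolding layered_def by blast
  obtain Gs where G: "ascending_lc Xs p Gs" "\<forall>M. minimal_multiwedge Xs p Gs M \<longrightarrow> (\<exists>c. \<forall>z\<in>M. \<gamma>2 z = c)"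
    using l2 unfolding layered_def by blast
  have "\<forall>i. \<exists>H. i < p \<longrightarrow> cont_dissection (Xle Xs (Suc i)) H \<and> l_complete (Xle Xs (Suc i)) H \<and> Fs i \<subseteq> H \<and> Gs i \<subseteq> H"
  proof
    fix i show "\<exists>H. i < p \<longrightarrow> cont_dissection (Xle Xs (Suc i)) H \<and> l_complete (Xle Xs (Suc i)) H \<and> Fs i \<subseteq> H \<and> Gs i \<subseteq> H"
    proof (cases "i < p")
      case True
      then have "cont_dissection (Xle Xs (Suc i)) (Fs i)" "l_complete (Xle Xs (Suc i)) (Fs i)"
        "cont_dissection (Xle Xs (Suc i)) (Gs i)" "l_complete (Xle Xs (Suc i)) (Gs i)"
        using F(1) G(1) unfolding ascending_lc_def by blast+
      then show ?thesis using join_exists by blast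
    qed blast
  qed
  then obtain Hs where H: "\<forall>i. i < p \<longrightarrow> cont_dissection (Xle Xs (Suc i)) (Hs i) \<and> l_complete (Xle Xs (Suc i)) (Hs i) \<and> Fs i \<subseteq> Hs i \<and> Gs i \<subseteq> Hs i"
    by (rule choice[THEN exE])
  have asc: "ascending_lc Xs p Hs" unfolding ascending_lc_def using H by blast
  have "\<exists>c. \<forall>z\<in>M. \<Phi> (\<gamma>1 z) (\<gamma>2 z) = c" if M: "minimal_multiwedge Xs p Hs M" for M
  proof -
    obtain c1 where "\<forall>z\<in>M. \<gamma>1 z = c1" using refine[OF F(1) asc _ F(2) M] H by blast
    moreover obtain c2 where "\<forall>z\<in>M. \<gamma>2 z = c2" using refine[OF G(1) asc _ G(2) M] H by blast
    ultimately show ?thesis by auto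
  qed
  then show ?thesis unfolding layered_def using asc by blast
qed

lemma layered_comp:
  assumes "layered Xs p \<gamma>" shows "layered Xs p (\<lambda>z. \<psi> (\<gamma> z))"
  using assms unfolding layered_def by metis

primrec Gseq :: "(nat \<Rightarrow> 'z \<Rightarrow> 'g::metric_space set) \<Rightarrow> nat \<Rightarrow> 'z \<Rightarrow> 'g" where
  "Gseq h 0 = (\<lambda>z. SOME a. a \<in> h 0 z)"
| "Gseq h (Suc k) = (\<lambda>z. SOME b. b \<in> h (Suc k) z \<and> dist (Gseq h k z) b < (1/2)^k)"

lemma Gseq_layered:
  assumes "\<forall>k. layered Xs p (h k)"
  shows "layered Xs p (Gseq h k)"
proof (induction k)
  case 0
  show ?case using layered_comp[OF assms[rule_format, of 0], of "\<lambda>V. SOME a. a \<in> V"] by simp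
next
  case (Suc k)
  show ?case using layered_comb[OF Suc assms[rule_format, of "Suc k"],
      of "\<lambda>a V. SOME b. b \<in> V \<and> dist a b < (1/2)^k"] by simp
qed

context
  fixes B :: "'g :: {ab_group_add, metric_space} set"
  assumes inv: "\<forall>x y z :: 'g. dist (x + z) (y + z) = dist x y"
    and B0: "0 \<in> B" and Bsub: "\<forall>x\<in>B. \<forall>y\<in>B. x - y \<in> B"
begin

lemma Badd: "x \<in> B \<Longrightarrow> y \<in> B \<Longrightarrow> x + y \<in> B"
proof -
  assume "x \<in> B" "y \<in> B"
  then have "0 - y \<in> B" using Bsub B0 by blast
  then have "x - (0 - y) \<in> B" using Bsub \<open>x \<in> B\<close> by blast
  then show ?thesis by simp
qed

lemma coset_mem: "a \<in> coset B c \<longleftrightarrow> a - c \<in> B"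
  unfolding coset_def by (auto simp: image_iff intro: bexI[of _ "a - c"])

lemma coset_self: "c \<in> coset B c"
  using B0 by (simp add: coset_mem)

lemma coset_eq: "a \<in> coset B c \<Longrightarrow> coset B a = coset B c"
proof -
  assume a: "a \<in> coset B c"
  then have ac: "a - c \<in> B" by (simp add: coset_mem)
  show ?thesis
  proof (intro equalityI subsetI)
    fix y assume "y \<in> coset B a"
    then have "y - a \<in> B" by (simp add: coset_mem)
    then have "(y - a) + (a - c) \<in> B" using ac Badd by blast
    then show "y \<in> coset B c" by (simp add: coset_mem)
  next
    fix y assume "y \<in> coset B c"
    then have "y - c \<in> B" by (simp add: coset_mem)
    then have "(y - c) - (a - c) \<in> B" using ac Bsub by blast
    then show "y \<in> coset B a" by (simp add: coset_mem)
  qed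
qed

lemma dist_shift: "dist (x - c) (y - c) = dist (x::'g) y"
  using inv[rule_format, of x "-c" y] by simp

lemma lift:
  assumes U: "U \<in> quotient_set B" and V: "V \<in> quotient_set B"
    and q: "quot_dist U V < r" and a: "a \<in> U"
  shows "\<exists>v\<in>V. dist a v < r"
proof -
  obtain c1 where c1: "U = coset B c1" using U unfolding quotient_set_def by blast
  obtain c2 where c2: "V = coset B c2" using V unfolding quotient_set_def by blast
  have ne: "{dist u v | u v. u \<in> U \<and> v \<in> V} \<noteq> {}" using c1 c2 coset_self by blast
  obtain d where "d \<in> {dist u v | u v. u \<in> U \<and> v \<in> V}" "d < r"
    using cInf_lessD[OF ne] q unfolding quot_dist_def by blast
  then obtain u v where uv: "u \<in> U" "v \<in> V" "dist u v < r" by blast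
  have au: "a - u \<in> B"
  proof -
    have "a - c1 \<in> B" "u - c1 \<in> B" using a uv c1 by (auto simp: coset_mem)
    then have "(a - c1) - (u - c1) \<in> B" using Bsub by blast
    then show ?thesis by simp
  qed
  have "v - c2 \<in> B" using uv c2 by (simp add: coset_mem)
  then have "(v - c2) + (a - u) \<in> B" using au Badd by blast
  then have m: "v + (a - u) \<in> V" unfolding c2 coset_mem by (simp add: algebra_simps)
  have "dist a (v + (a - u)) = dist u v"
    using inv[rule_format, of u "a - u" v] by simp
  then have "dist a (v + (a - u)) < r" using uv by simp
  then show ?thesis using m by blast
qed

lemma quot_dist_sym: "quot_dist U V = quot_dist V U"
proof -
  have "{dist u v | u v. u \<in> U \<and> v \<in> V} = {dist u v | u v. u \<in> V \<and> v \<in> U}"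
    by (auto; metis dist_commute)
  then show ?thesis unfolding quot_dist_def by simp
qed

lemma lift2:
  assumes U: "U \<in> quotient_set B" and V: "V \<in> quotient_set B"
    and q: "quot_dist U V < r" and b: "b \<in> V"
  shows "\<exists>u\<in>U. dist b u < r"
proof -
  have "quot_dist V U < r" using q quot_dist_sym by metis
  then show ?thesis using lift[OF V U _ b] by blast
qed

end


theorem proposition6p4:
  fixes Xs :: "nat \<Rightarrow> 'a topology" and p :: nat
    and B :: "'g :: {ab_group_add, polish_space} set"
    and f :: "(nat \<Rightarrow> 'a) \<times> (nat \<Rightarrow> real) \<Rightarrow> 'g set"
  assumes metr: "\<forall>i<p. metrizable_space (Xs i)"
    and inv: "\<forall>x y z :: 'g. dist (x + z) (y + z) = dist x y"
    and Bclosed: "closed B" and B0: "0 \<in> B" and Bsub: "\<forall>x\<in>B. \<forall>y\<in>B. x - y \<in> B"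
    and f: "almost_layered Xs p (quotient_set B) quot_dist f"
  shows "\<exists>F :: (nat \<Rightarrow> 'a) \<times> (nat \<Rightarrow> real) \<Rightarrow> 'g.
           almost_layered Xs p UNIV dist F \<and>
           (\<forall>z\<in>dom_layer Xs p. f z = coset B (F z))"
proof -
  let ?D = "dom_layer Xs p"
  note Lift = lift[OF inv B0 Bsub] and Lift2 = lift2[OF inv B0 Bsub]
  note Cmem = coset_mem[OF inv B0 Bsub] and Cself = coset_self[OF inv B0 Bsub]
    and Ceq = coset_eq[OF inv B0 Bsub] and Dsh = dist_shift[OF inv B0 Bsub]
  have fQ: "\<forall>z\<in>?D. f z \<in> quotient_set B" using f unfolding almost_layered_def by blast
  obtain g :: "nat \<Rightarrow> (nat \<Rightarrow> 'a) \<times> (nat \<Rightarrow> real) \<Rightarrow> 'g set" where g: "\<forall>n. layered Xs p (g n) \<and> (\<forall>z\<in>?D. g n z \<in> quotient_set B)"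
    and conv: "\<forall>\<epsilon>>0. \<exists>N. \<forall>n\<ge>N. \<forall>z\<in>?D. quot_dist (f z) (g n z) \<le> \<epsilon>"
    using f unfolding almost_layered_def by blast
  have "\<forall>k. \<exists>N. \<forall>z\<in>?D. quot_dist (f z) (g N z) \<le> (1/2)^(k+2)"
  proof
    fix k :: nat
    have "(0::real) < (1/2)^(k+2)" by simp
    from conv[rule_format, OF this] obtain N where N: "\<forall>n\<ge>N. \<forall>z\<in>?D. quot_dist (f z) (g n z) \<le> (1/2)^(k+2)"
      by (elim exE)
    have "\<forall>z\<in>?D. quot_dist (f z) (g N z) \<le> (1/2)^(k+2)" using N by blast
    then show "\<exists>N. \<forall>z\<in>?D. quot_dist (f z) (g N z) \<le> (1/2)^(k+2)" by (rule exI)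
  qed
  then obtain Nk where Nk: "\<forall>k. \<forall>z\<in>?D. quot_dist (f z) (g (Nk k) z) \<le> (1/2)^(k+2)"
    by (rule choice[THEN exE])
  define h where "h k = g (Nk k)" for k
  have hq: "quot_dist (f z) (h k z) < (1/2)^(k+1)" if "z \<in> ?D" for z k
  proof -
    have "quot_dist (f z) (h k z) \<le> (1/2)^(k+2)" using Nk that unfolding h_def by blast
    moreover have "(1/2::real)^(k+2) < (1/2)^(k+1)" by (simp add: power_strict_decreasing)
    ultimately show ?thesis by linarith
  qed
  have hQ: "h k z \<in> quotient_set B" if "z \<in> ?D" for z k using g that unfolding h_def by blast
  have hL: "\<forall>k. layered Xs p (h k)" using g unfolding h_def by blast
  define G where "G = Gseq h"
  have exstep: "\<exists>b. b \<in> h (Suc k) z \<and> dist (G k z) b < (1/2)^k"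
    if z: "z \<in> ?D" and Gk: "G k z \<in> h k z" for k z
  proof -
    have "quot_dist (f z) (h k z) < (1/2)^(k+1)" using hq z by blast
    then obtain a where a: "a \<in> f z" "dist (G k z) a < (1/2)^(k+1)"
      using Lift2[OF fQ[rule_format, OF z] hQ[OF z] _ Gk] by blast
    have q2: "quot_dist (f z) (h (Suc k) z) < (1/2)^(k+2)" using hq[OF z, of "Suc k"] by simp
    obtain b where b: "b \<in> h (Suc k) z" "dist a b < (1/2)^(k+2)"
      using Lift[OF fQ[rule_format, OF z] hQ[OF z] q2 a(1)] by blast
    have "dist (G k z) b \<le> dist (G k z) a + dist a b" by (rule dist_triangle)
    also have "\<dots> < (1/2)^(k+1) + (1/2)^(k+2)" using a b by linarith
    also have "\<dots> \<le> (1/2)^k" by simp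
    finally show ?thesis using b by blast
  qed
  have mem: "\<forall>z\<in>?D. G k z \<in> h k z" for k
  proof (induction k)
    case 0
    show ?case
    proof
      fix z assume z: "z \<in> ?D"
      obtain c where "h 0 z = coset B c" using hQ[OF z] unfolding quotient_set_def by blast
      then have "\<exists>a. a \<in> h 0 z" using Cself by blast
      from someI_ex[OF this] show "G 0 z \<in> h 0 z" unfolding G_def by simp
    qed
  next
    case (Suc k)
    show ?case
    proof
      fix z assume z: "z \<in> ?D"
      have "\<exists>b. b \<in> h (Suc k) z \<and> dist (G k z) b < (1/2)^k" using exstep z Suc by blast
      from someI_ex[OF this] show "G (Suc k) z \<in> h (Suc k) z" unfolding G_def by simp
    qed
  qed
  have dstep: "dist (G k z) (G (Suc k) z) < (1/2)^k" if z: "z \<in> ?D" for k z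
  proof -
    have "\<exists>b. b \<in> h (Suc k) z \<and> dist (G k z) b < (1/2)^k" using exstep z mem by blast
    from someI_ex[OF this] show ?thesis unfolding G_def by simp
  qed
  have tele: "dist (G k z) (G (k + j) z) \<le> 2 * (1/2)^k - 2 * (1/2)^(k+j)" if z: "z \<in> ?D" for k j z
  proof (induction j)
    case 0 then show ?case by simp
  next
    case (Suc j)
    have "dist (G k z) (G (k + Suc j) z) \<le> dist (G k z) (G (k + j) z) + dist (G (k + j) z) (G (Suc (k + j)) z)"
      using dist_triangle by simp
    also have "\<dots> \<le> 2 * (1/2)^k - 2 * (1/2)^(k+j) + (1/2)^(k+j)"
      using Suc dstep[OF z, of "k + j"] by linarith
    also have "\<dots> = 2 * (1/2)^k - 2 * (1/2)^(k + Suc j)" by simp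
    finally show ?case .
  qed
  have bnd: "dist (G k z) (G m z) \<le> 2 * (1/2)^k" if z: "z \<in> ?D" and km: "k \<le> m" for k m z
  proof -
    obtain j where mj: "m = k + j" using km le_Suc_ex by blast
    have "(0::real) \<le> (1/2)^(k+j)" by simp
    then show ?thesis using tele[OF z, of k j] unfolding mj by linarith
  qed
  have small: "\<exists>N. 4 * (1/2::real)^N < e" if e0: "e > 0" for e
  proof -
    have "e/4 > 0" using e0 by simp
    then obtain N where "(1/2::real)^N < e/4" using real_arch_pow_inv[of "e/4" "1/2"] by auto
    then show ?thesis by (intro exI[of _ N]) linarith
  qed
  have powmono: "(1/2::real)^n \<le> (1/2)^N" if "N \<le> n" for n N
    using that by (simp add: power_decreasing)
  have cauchy: "Cauchy (\<lambda>k. G k z)" if z: "z \<in> ?D" for z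
  proof (rule metric_CauchyI)
    fix e :: real assume e: "e > 0"
    obtain N where N: "4 * (1/2::real)^N < e" using small e by blast
    show "\<exists>M. \<forall>m\<ge>M. \<forall>n\<ge>M. dist (G m z) (G n z) < e"
    proof (intro exI allI impI)
      fix m n assume mn: "N \<le> m" "N \<le> n"
      have "dist (G m z) (G n z) \<le> dist (G N z) (G m z) + dist (G N z) (G n z)"
        by (rule dist_triangle3)
      also have "\<dots> \<le> 4 * (1/2)^N" using bnd[OF z mn(1)] bnd[OF z mn(2)] by linarith
      finally show "dist (G m z) (G n z) < e" using N by linarith
    qed
  qed
  define F where "F z = lim (\<lambda>k. G k z)" for z
  have lim: "(\<lambda>k. G k z) \<longlonglongrightarrow> F z" if z: "z \<in> ?D" for z
    using cauchy[OF z] unfolding F_def by (simp add: Cauchy_convergent_iff convergent_LIMSEQ_iff)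
  have Fbnd: "dist (F z) (G k z) \<le> 2 * (1/2)^k" if z: "z \<in> ?D" for z k
  proof -
    have "((\<lambda>m. dist (G m z) (G k z)) \<longlonglongrightarrow> dist (F z) (G k z))"
      by (intro tendsto_intros lim[OF z])
    moreover have "eventually (\<lambda>m. dist (G m z) (G k z) \<le> 2 * (1/2)^k) sequentially"
      unfolding eventually_sequentially
    proof (intro exI allI impI)
      fix m assume "k \<le> m"
      then have "dist (G k z) (G m z) \<le> 2 * (1/2)^k" by (rule bnd[OF z])
      then show "dist (G m z) (G k z) \<le> 2 * (1/2)^k" by (simp add: dist_commute)
    qed
    ultimately show ?thesis by (rule tendsto_upperbound) simp
  qed
  have AL: "almost_layered Xs p UNIV dist F"
    unfolding almost_layered_def
  proof (intro conjI exI[of _ G])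
    show "\<forall>z\<in>?D. F z \<in> UNIV" by simp
    show "\<forall>n. layered Xs p (G n) \<and> (\<forall>z\<in>?D. G n z \<in> UNIV)"
      using Gseq_layered[OF hL] unfolding G_def by simp
    show "\<forall>\<epsilon>>0. \<exists>N. \<forall>n\<ge>N. \<forall>z\<in>?D. dist (F z) (G n z) \<le> \<epsilon>"
    proof (intro allI impI)
      fix e :: real assume e: "e > 0"
      obtain N where N: "4 * (1/2::real)^N < e" using small e by blast
      show "\<exists>N. \<forall>n\<ge>N. \<forall>z\<in>?D. dist (F z) (G n z) \<le> e"
      proof (intro exI allI impI ballI)
        fix n z assume n: "N \<le> n" and z: "z \<in> ?D"
        have "dist (F z) (G n z) \<le> 2 * (1/2)^n" by (rule Fbnd[OF z])
        also have "\<dots> \<le> 2 * (1/2)^N" using powmono[OF n] by simp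
        finally have "dist (F z) (G n z) \<le> 2 * (1/2)^N" .
        moreover have "(0::real) \<le> (1/2)^N" by simp
        ultimately show "dist (F z) (G n z) \<le> e" using N by linarith
      qed
    qed
  qed
  have "f z = coset B (F z)" if z: "z \<in> ?D" for z
  proof -
    obtain c where c: "f z = coset B c" using fQ z unfolding quotient_set_def by blast
    have "\<forall>k. \<exists>a. a \<in> f z \<and> dist (G k z) a < (1/2)^(k+1)"
    proof
      fix k
      show "\<exists>a. a \<in> f z \<and> dist (G k z) a < (1/2)^(k+1)"
        using Lift2[OF fQ[rule_format, OF z] hQ[OF z] hq[OF z] mem[rule_format, OF z]] by blast
    qed
    then obtain a where a: "\<forall>k. a k \<in> f z \<and> dist (G k z) (a k) < (1/2)^(k+1)"
      by (rule choice[THEN exE])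
    have "(\<lambda>k. a k - c) \<longlonglongrightarrow> F z - c"
    proof (rule metric_LIMSEQ_I)
      fix r :: real assume r: "0 < r"
      obtain N where N: "4 * (1/2::real)^N < r" using small r by blast
      show "\<exists>no. \<forall>n\<ge>no. dist (a n - c) (F z - c) < r"
      proof (intro exI allI impI)
        fix n assume n: "N \<le> n"
        have "dist (a n - c) (F z - c) = dist (a n) (F z)" by (rule Dsh)
        also have "\<dots> \<le> dist (G n z) (a n) + dist (G n z) (F z)" by (rule dist_triangle3)
        also have "\<dots> < (1/2)^(n+1) + 2 * (1/2)^n"
        proof -
          have "dist (G n z) (a n) < (1/2)^(n+1)" using a by blast
          moreover have "dist (G n z) (F z) \<le> 2 * (1/2)^n" using Fbnd[OF z, of n] by (simp add: dist_commute)
          ultimately show ?thesis by linarith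
        qed
        also have "\<dots> \<le> 4 * (1/2)^n" by simp
        also have "\<dots> \<le> 4 * (1/2)^N" using powmono[OF n] by simp
        finally show "dist (a n - c) (F z - c) < r" using N by linarith
      qed
    qed
    moreover have "\<And>k. a k - c \<in> B" using a c Cmem by blast
    ultimately have "F z - c \<in> B" using closed_sequentially[OF Bclosed, of "\<lambda>k. a k - c"] by blast
    then have "F z \<in> coset B c" using Cmem by blast
    then show ?thesis using Ceq c by simp
  qed
  then show ?thesis using AL by blast
qed

end
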